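(* Let $(a_k)_{k\ge1}$ be an increasing sequence of positive integers such that $$\lim_{k\to\infty}\frac{a_{k+1}}{a_k}=\eta>1$$ for some transcendental number $\eta$. For $n\in\mathbb N$ let $S_n(\omega)=\sum_{k=1}^n\cos(2\pi a_k\omega)$, $\omega\in[0,1]$, viewed as a random variable on $[0,1]$ with Lebesgue measure. Then for every integer $m\ge1$, $$\kappa_m(S_n)-n\widetilde\kappa_m=\mathcal O(1)\qquad\text{as }n\to\infty .$$ In particular $\kappa_m(S_n)/n\to\widetilde\kappa_m$ as $n\to\infty$.
   Context: For a bounded random variable $X$, its $m$-th cumulant is $\kappa_m(X)=\frac{d^m}{dt^m}\log\mathbb E[e^{tX}]\big|_{t=0}$. The constants $\widetilde\kappa_m$ are the cumulants of the arcsine law, i.e. of $\cos(2\pi U)$ with $U$ uniform on $[0,1]$: $\widetilde\kappa_m=\frac{d^m}{dt^m}\log I_0(t)\big|_{t=0}$, where $I_0(t)=\sum_{j\ge0}\frac{(t/2)^{2j}}{(j!)^2}$ is the modified Bessel function of the first kind. Equivalently, $n\widetilde\kappa_m$ is the $m$-th cumulant of $\sum_{k=1}^n\cos(2\pi a_kU_k)$ with $U_1,U_2,\dots$ i.i.d. uniform on $[0,1]$. *)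

theory Defs
  imports "HOL-Probability.Probability" "HOL-Computational_Algebra.Polynomial"
    "HOL-Library.Landau_Symbols"
begin

definition S :: "(nat \<Rightarrow> nat) \<Rightarrow> nat \<Rightarrow> real \<Rightarrow> real" where
  "S a n \<omega> = (\<Sum>k=1..n. cos (2 * pi * real (a k) * \<omega>))"

definition mgf01 :: "(real \<Rightarrow> real) \<Rightarrow> real \<Rightarrow> real" where
  "mgf01 X t = (LINT \<omega>|lebesgue_on {0..1}. exp (t * X \<omega>))"

definition cumulant01 :: "nat \<Rightarrow> (real \<Rightarrow> real) \<Rightarrow> real" where
  "cumulant01 m X = (deriv ^^ m) (\<lambda>t. ln (mgf01 X t)) 0"

definition besselI0 :: "real \<Rightarrow> real" where
  "besselI0 t = (\<Sum>j. (t / 2) ^ (2 * j) / (fact j)^2)"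

text \<open>Cumulants of the arcsine law.\<close>
definition arcsine_cumulant :: "nat \<Rightarrow> real" where
  "arcsine_cumulant m = (deriv ^^ m) (\<lambda>t. ln (besselI0 t)) 0"

end

theory Submission
  imports Defs
begin
definition Ck :: "nat \<Rightarrow> (real \<Rightarrow> real) \<Rightarrow> bool" where
  "Ck k f \<longleftrightarrow> (\<forall>j<k. \<forall>x. ((deriv^^j) f has_real_derivative (deriv^^(Suc j)) f x) (at x))"

definition smooth :: "(real \<Rightarrow> real) \<Rightarrow> bool" where
  "smooth f \<longleftrightarrow> (\<forall>k. Ck k f)"

lemma deriv_funpow_Suc: "(deriv^^(Suc j)) f = (deriv^^j) (deriv f)"
  by (simp add: funpow_Suc_right del: funpow.simps)

lemma Ck_0 [simp]: "Ck 0 f" by (simp add: Ck_def)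

lemma Ck_Suc: "Ck (Suc k) f \<longleftrightarrow> (\<forall>x. (f has_real_derivative deriv f x) (at x)) \<and> Ck k (deriv f)"
proof
  assume A: "Ck (Suc k) f"
  have "\<forall>x. (f has_real_derivative deriv f x) (at x)"
    using A unfolding Ck_def by (metis funpow_0 funpow_Suc_right comp_apply zero_less_Suc)
  moreover have "Ck k (deriv f)"
    unfolding Ck_def
  proof (intro allI impI)
    fix j x assume "j < k"
    then have "((deriv^^(Suc j)) f has_real_derivative (deriv^^(Suc (Suc j))) f x) (at x)"
      using A unfolding Ck_def by auto
    then show "((deriv^^j) (deriv f) has_real_derivative (deriv^^(Suc j)) (deriv f) x) (at x)"
      by (simp only: deriv_funpow_Suc)
  qed
  ultimately show "(\<forall>x. (f has_real_derivative deriv f x) (at x)) \<and> Ck k (deriv f)" by blast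
next
  assume A: "(\<forall>x. (f has_real_derivative deriv f x) (at x)) \<and> Ck k (deriv f)"
  show "Ck (Suc k) f"
    unfolding Ck_def
  proof (intro allI impI)
    fix j x assume j: "j < Suc k"
    show "((deriv^^j) f has_real_derivative (deriv^^(Suc j)) f x) (at x)"
    proof (cases j)
      case 0 then show ?thesis using A by simp
    next
      case (Suc j')
      then have "j' < k" using j by simp
      then have "((deriv^^j') (deriv f) has_real_derivative (deriv^^(Suc j')) (deriv f) x) (at x)"
        using A unfolding Ck_def by auto
      then show ?thesis using Suc by (simp only: deriv_funpow_Suc)
    qed
  qed
qed

lemma Ck_mono: "Ck k f \<Longrightarrow> j \<le> k \<Longrightarrow> Ck j f"
  unfolding Ck_def by auto

lemma smooth_Ck: "smooth f \<Longrightarrow> Ck k f" by (simp add: smooth_def)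

lemma smooth_deriv: "smooth f \<Longrightarrow> smooth (deriv f)"
  unfolding smooth_def using Ck_Suc by blast

lemma smooth_DERIV: "smooth f \<Longrightarrow> (f has_real_derivative deriv f x) (at x)"
  unfolding smooth_def using Ck_Suc by blast

lemma smooth_iff: "smooth f \<longleftrightarrow> (\<forall>x. (f has_real_derivative deriv f x) (at x)) \<and> smooth (deriv f)"
  unfolding smooth_def
  by (metis Ck_Suc Ck_mono le_add2 plus_1_eq_Suc)

lemma Ck_add: "Ck k f \<Longrightarrow> Ck k g \<Longrightarrow> Ck k (\<lambda>x. f x + g x)"
proof (induction k arbitrary: f g)
  case 0 then show ?case by simp
next
  case (Suc k)
  have df: "\<And>x. (f has_real_derivative deriv f x) (at x)" and dg: "\<And>x. (g has_real_derivative deriv g x) (at x)"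
    using Suc.prems Ck_Suc by blast+
  have d: "\<And>x. ((\<lambda>x. f x + g x) has_real_derivative deriv f x + deriv g x) (at x)"
    using df dg by (intro DERIV_add) auto
  have e: "deriv (\<lambda>x. f x + g x) = (\<lambda>x. deriv f x + deriv g x)"
    using d by (intro ext DERIV_imp_deriv) auto
  show ?case unfolding Ck_Suc e using d Suc.IH Suc.prems Ck_Suc by auto
qed

lemma Ck_const: "Ck k (\<lambda>x. c)"
proof (induction k arbitrary: c)
  case 0 then show ?case by simp
next
  case (Suc k)
  have e: "deriv (\<lambda>x. c) = (\<lambda>x. 0)" by (intro ext DERIV_imp_deriv) auto
  show ?case unfolding Ck_Suc e using Suc.IH by auto
qed

lemma Ck_mult: "Ck k f \<Longrightarrow> Ck k g \<Longrightarrow> Ck k (\<lambda>x. f x * g x)"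
proof (induction k arbitrary: f g)
  case 0 then show ?case by simp
next
  case (Suc k)
  have df: "\<And>x. (f has_real_derivative deriv f x) (at x)" and dg: "\<And>x. (g has_real_derivative deriv g x) (at x)"
    using Suc.prems Ck_Suc by blast+
  have d: "\<And>x. ((\<lambda>x. f x * g x) has_real_derivative deriv f x * g x + f x * deriv g x) (at x)"
    using df dg by (intro derivative_eq_intros) auto
  have e: "deriv (\<lambda>x. f x * g x) = (\<lambda>x. deriv f x * g x + f x * deriv g x)"
    using d by (intro ext DERIV_imp_deriv) auto
  have "Ck k (deriv f)" "Ck k (deriv g)" "Ck k f" "Ck k g"
    using Suc.prems Ck_Suc Ck_mono le_SucI by blast+
  then show ?case unfolding Ck_Suc e using d Suc.IH Ck_add by auto
qed

lemma Ck_inverse: "Ck k f \<Longrightarrow> (\<forall>x. f x > 0) \<Longrightarrow> Ck k (\<lambda>x. 1 / f x)"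
proof (induction k)
  case 0 then show ?case by simp
next
  case (Suc k)
  have df: "\<And>x. (f has_real_derivative deriv f x) (at x)"
    using Suc.prems Ck_Suc by blast
  have d: "\<And>x. ((\<lambda>x. 1 / f x) has_real_derivative - deriv f x * (1 / f x) * (1 / f x)) (at x)"
  proof -
    fix x
    have "f x \<noteq> 0" using Suc.prems by (metis less_irrefl)
    then show "((\<lambda>x. 1 / f x) has_real_derivative - deriv f x * (1 / f x) * (1 / f x)) (at x)"
      using df[of x] by (auto intro!: derivative_eq_intros simp: field_simps power2_eq_square)
  qed
  have e: "deriv (\<lambda>x. 1 / f x) = (\<lambda>x. - deriv f x * (1 / f x) * (1 / f x))"
    using d by (intro ext DERIV_imp_deriv) auto
  have "Ck k (deriv f)" "Ck k f"
    using Suc.prems Ck_Suc Ck_mono le_SucI by blast+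
  then have "Ck k (\<lambda>x. 1 / f x)" using Suc by blast
  have "Ck k (\<lambda>x. - deriv f x)"
    using Ck_mult[OF Ck_const[of k "-1"] \<open>Ck k (deriv f)\<close>] by simp
  then have "Ck k (\<lambda>x. - deriv f x * (1 / f x))"
    using Ck_mult \<open>Ck k (\<lambda>x. 1 / f x)\<close> by blast
  then have "Ck k (\<lambda>x. - deriv f x * (1 / f x) * (1 / f x))"
    using Ck_mult \<open>Ck k (\<lambda>x. 1 / f x)\<close> by blast
  then show ?case unfolding Ck_Suc e using d by blast
qed

lemma Ck_ln: "Ck k f \<Longrightarrow> (\<forall>x. f x > 0) \<Longrightarrow> Ck k (\<lambda>x. ln (f x))"
proof (cases k)
  case 0 then show ?thesis by simp
next
  case (Suc k')
  assume A: "Ck k f" "\<forall>x. f x > 0"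
  have df: "\<And>x. (f has_real_derivative deriv f x) (at x)"
    using A Suc Ck_Suc by blast
  have d: "\<And>x. ((\<lambda>x. ln (f x)) has_real_derivative deriv f x * (1 / f x)) (at x)"
  proof -
    fix x
    have "f x > 0" using A by auto
    then show "((\<lambda>x. ln (f x)) has_real_derivative deriv f x * (1 / f x)) (at x)"
      using df[of x] by (auto intro!: derivative_eq_intros simp: field_simps)
  qed
  have e: "deriv (\<lambda>x. ln (f x)) = (\<lambda>x. deriv f x * (1 / f x))"
    using d by (intro ext DERIV_imp_deriv) auto
  have "Ck k' (deriv f)" "Ck k' f"
    using A Suc Ck_Suc Ck_mono le_SucI by blast+
  moreover have "Ck k' (\<lambda>x. 1 / f x)" using Ck_inverse A \<open>Ck k' f\<close> by blast
  ultimately have "Ck k' (\<lambda>x. deriv f x * (1 / f x))" using Ck_mult by blast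
  then show ?thesis unfolding Suc Ck_Suc e using d by blast
qed

lemma smooth_add: "smooth f \<Longrightarrow> smooth g \<Longrightarrow> smooth (\<lambda>x. f x + g x)"
  by (simp add: smooth_def Ck_add)
lemma smooth_mult: "smooth f \<Longrightarrow> smooth g \<Longrightarrow> smooth (\<lambda>x. f x * g x)"
  by (simp add: smooth_def Ck_mult)
lemma smooth_const: "smooth (\<lambda>x. c)"
  by (simp add: smooth_def Ck_const)
lemma smooth_inverse: "smooth f \<Longrightarrow> (\<forall>x. f x > 0) \<Longrightarrow> smooth (\<lambda>x. 1 / f x)"
  by (simp add: smooth_def Ck_inverse)
lemma smooth_ln: "smooth f \<Longrightarrow> (\<forall>x. f x > 0) \<Longrightarrow> smooth (\<lambda>x. ln (f x))"
  by (simp add: smooth_def Ck_ln)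
lemma smooth_uminus: "smooth f \<Longrightarrow> smooth (\<lambda>x. - f x)"
  using smooth_mult[OF smooth_const[of "-1"]] by simp
lemma smooth_diff: "smooth f \<Longrightarrow> smooth g \<Longrightarrow> smooth (\<lambda>x. f x - g x)"
  using smooth_add[OF _ smooth_uminus] by simp

lemma deriv_iter_add:
  assumes "smooth f" "smooth g"
  shows "(deriv^^j) (\<lambda>x. f x + g x) = (\<lambda>x. (deriv^^j) f x + (deriv^^j) g x)"
  using assms
proof (induction j arbitrary: f g)
  case 0 then show ?case by simp
next
  case (Suc j)
  have e: "deriv (\<lambda>x. f x + g x) = (\<lambda>x. deriv f x + deriv g x)"
    using Suc.prems by (intro ext DERIV_imp_deriv DERIV_add smooth_DERIV)
  show ?case unfolding deriv_funpow_Suc e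
    using Suc.IH Suc.prems smooth_deriv by blast
qed

lemma deriv_iter_uminus:
  assumes "smooth f"
  shows "(deriv^^j) (\<lambda>x. - f x) = (\<lambda>x. - (deriv^^j) f x)"
  using assms
proof (induction j arbitrary: f)
  case 0 then show ?case by simp
next
  case (Suc j)
  have e: "deriv (\<lambda>x. - f x) = (\<lambda>x. - deriv f x)"
    using Suc.prems by (intro ext DERIV_imp_deriv DERIV_minus smooth_DERIV)
  show ?case unfolding deriv_funpow_Suc e
    using Suc.IH Suc.prems smooth_deriv by blast
qed

lemma deriv_iter_diff:
  assumes "smooth f" "smooth g"
  shows "(deriv^^j) (\<lambda>x. f x - g x) = (\<lambda>x. (deriv^^j) f x - (deriv^^j) g x)"
  using deriv_iter_add[OF assms(1) smooth_uminus[OF assms(2)]] deriv_iter_uminus[OF assms(2)]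
  by simp

lemma smooth_iter_DERIV: "smooth f \<Longrightarrow> ((deriv^^j) f has_real_derivative deriv ((deriv^^j) f) x) (at x)"
proof (induction j arbitrary: f)
  case 0 then show ?case by (simp add: smooth_DERIV)
next
  case (Suc j)
  show ?case unfolding deriv_funpow_Suc using Suc smooth_deriv by blast
qed

lemma Suc_choose': "Suc n choose k = (n choose k) + (if k = 0 then 0 else (n choose (k-1)))"
  by (cases k) simp_all

lemma leibniz_smooth:
  assumes "smooth f" "smooth g"
  shows "(deriv ^^ n) (\<lambda>w. f w * g w) z =
           (\<Sum>i = 0..n. of_nat (n choose i) * (deriv ^^ i) f z * (deriv ^^ (n-i)) g z)"
proof (induction n arbitrary: z)
  case 0 then show ?case by simp
next
  case (Suc n z)
  have *: "\<And>n. ((deriv ^^ n) f has_field_derivative deriv ((deriv ^^ n) f) z) (at z)"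
          "\<And>n. ((deriv ^^ n) g has_field_derivative deriv ((deriv ^^ n) g) z) (at z)"
    using assms smooth_iter_DERIV by auto
  have sumeq: "(\<Sum>i = 0..n.
               of_nat (n choose i) * (deriv ((deriv ^^ i) f) z * (deriv ^^ (n-i)) g z + deriv ((deriv ^^ (n-i)) g) z * (deriv ^^ i) f z)) =
            g z * deriv ((deriv ^^ n) f) z + (\<Sum>i = 0..n. (deriv ^^ i) f z * (of_nat (Suc n choose i) * (deriv ^^ (Suc n - i)) g z))"
    apply (simp add: Suc_choose' algebra_simps sum.distrib)
    apply (subst (4) sum_Suc_reindex)
    apply (auto simp: algebra_simps Suc_diff_le intro: sum.cong)
    done
  have eqf: "(deriv ^^ n) (\<lambda>w. f w * g w) = (\<lambda>w. (\<Sum>i = 0..n. of_nat (n choose i) * (deriv ^^ i) f w * (deriv ^^ (n-i)) g w))"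
    using Suc.IH by auto
  have "((deriv ^^ n) (\<lambda>w. f w * g w) has_field_derivative
         (\<Sum>i = 0..Suc n. (Suc n choose i) * (deriv ^^ i) f z * (deriv ^^ (Suc n - i)) g z))
        (at z)"
    unfolding eqf
    apply (rule DERIV_cong)
    apply (rule derivative_eq_intros | simp)+
       apply (auto intro: DERIV_mult * )
    using sumeq by (simp add: sum.atLeast0_atMost_Suc algebra_simps)
  then show ?case
    unfolding funpow.simps o_apply
    by (simp add: DERIV_imp_deriv)
qed

definition Flat :: "nat \<Rightarrow> (real \<Rightarrow> real) \<Rightarrow> bool" where
  "Flat m h \<longleftrightarrow> (\<forall>j\<le>m. (deriv^^j) h 0 = 0)"

lemma Flat_Suc: "Flat (Suc m) h \<longleftrightarrow> h 0 = 0 \<and> Flat m (deriv h)"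
proof
  assume A: "Flat (Suc m) h"
  show "h 0 = 0 \<and> Flat m (deriv h)"
    using A unfolding Flat_def
    by (metis Suc_le_mono deriv_funpow_Suc funpow_0 le0)
next
  assume A: "h 0 = 0 \<and> Flat m (deriv h)"
  show "Flat (Suc m) h" unfolding Flat_def
  proof (intro allI impI)
    fix j assume "j \<le> Suc m"
    then show "(deriv^^j) h 0 = 0"
      using A unfolding Flat_def
      by (cases j) (auto simp only: deriv_funpow_Suc funpow_0 Suc_le_mono)
  qed
qed

lemma Flat_0: "Flat 0 h \<longleftrightarrow> h 0 = 0" by (simp add: Flat_def)

lemma Flat_mono: "Flat m h \<Longrightarrow> j \<le> m \<Longrightarrow> Flat j h" by (auto simp: Flat_def)

lemma Flat_add: "smooth h1 \<Longrightarrow> smooth h2 \<Longrightarrow> Flat m h1 \<Longrightarrow> Flat m h2 \<Longrightarrow> Flat m (\<lambda>x. h1 x + h2 x)"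
  by (simp add: Flat_def deriv_iter_add)

lemma Flat_mult: "smooth h \<Longrightarrow> smooth p \<Longrightarrow> Flat m h \<Longrightarrow> Flat m (\<lambda>x. h x * p x)"
proof (induction m arbitrary: h p)
  case 0 then show ?case by (simp add: Flat_0)
next
  case (Suc m)
  have e: "deriv (\<lambda>x. h x * p x) = (\<lambda>x. deriv h x * p x + h x * deriv p x)"
  proof
    fix x
    have "((\<lambda>x. h x * p x) has_real_derivative deriv h x * p x + deriv p x * h x) (at x)"
      by (rule DERIV_mult) (rule smooth_DERIV, use Suc.prems in blast)+
    then show "deriv (\<lambda>x. h x * p x) x = deriv h x * p x + h x * deriv p x"
      by (simp add: DERIV_imp_deriv mult.commute)
  qed
  have f1: "Flat m (\<lambda>x. deriv h x * p x)"
    using Suc.IH[of "deriv h" p] Suc.prems smooth_deriv Flat_Suc by blast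
  have f2: "Flat m (\<lambda>x. h x * deriv p x)"
    using Suc.IH[of h "deriv p"] Suc.prems smooth_deriv Flat_mono le_SucI by blast
  have "Flat m (\<lambda>x. deriv h x * p x + h x * deriv p x)"
    using Flat_add[OF _ _ f1 f2] Suc.prems smooth_mult smooth_deriv by blast
  then show ?case unfolding Flat_Suc e using Suc.prems Flat_Suc by simp
qed

lemma log_jet:
  assumes sf: "smooth f" and sg: "smooth g" and fp: "\<forall>x. f x > 0" and gp: "\<forall>x. g x > 0"
    and eq: "\<forall>j\<le>m. (deriv^^j) f 0 = (deriv^^j) g 0"
  shows "(deriv^^m) (\<lambda>x. ln (f x)) 0 = (deriv^^m) (\<lambda>x. ln (g x)) 0"
proof -
  define h where "h = (\<lambda>x. f x - g x)"
  have sh: "smooth h" unfolding h_def using sf sg smooth_diff by blast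
  have Fh: "Flat m h" unfolding Flat_def h_def using eq deriv_iter_diff[OF sf sg] by simp
  define u where "u = (\<lambda>x. ln (f x) - ln (g x))"
  have slf: "smooth (\<lambda>x. ln (f x))" and slg: "smooth (\<lambda>x. ln (g x))"
    using smooth_ln sf sg fp gp by blast+
  have f0: "f 0 = g 0" using eq by (metis funpow_0 le0)
  have "Flat m u"
  proof (cases m)
    case 0 then show ?thesis by (simp add: Flat_0 u_def f0)
  next
    case (Suc m')
    have du: "deriv u = (\<lambda>x. (deriv h x * g x + (- deriv g x) * h x) * (1 / (f x * g x)))"
    proof (rule ext)
      fix x
      have "(u has_real_derivative deriv f x / f x - deriv g x / g x) (at x)"
        unfolding u_def using fp gp smooth_DERIV[OF sf] smooth_DERIV[OF sg]
        by (auto intro!: derivative_eq_intros)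
      then have A: "deriv u x = deriv f x / f x - deriv g x / g x" by (rule DERIV_imp_deriv)
      have B: "deriv h x = deriv f x - deriv g x"
        unfolding h_def using smooth_DERIV[OF sf] smooth_DERIV[OF sg]
        by (intro DERIV_imp_deriv) (auto intro!: derivative_eq_intros)
      have nz: "f x \<noteq> 0" "g x \<noteq> 0" using fp gp by (metis less_irrefl)+
      have C: "h x = f x - g x" by (simp add: h_def)
      show "deriv u x = (deriv h x * g x + (- deriv g x) * h x) * (1 / (f x * g x))"
        unfolding A B C using nz by (simp add: divide_simps) (simp add: algebra_simps)
    qed
    have Fdh: "Flat m' (deriv h)" using Fh Suc Flat_Suc by blast
    have Fh': "Flat m' h" using Fh Suc Flat_mono le_SucI by blast
    have s1: "smooth (\<lambda>x. deriv h x * g x)" using sh sg smooth_deriv smooth_mult by blast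
    have s2: "smooth (\<lambda>x. (- deriv g x) * h x)" using sh sg smooth_deriv smooth_mult smooth_uminus by blast
    have F1: "Flat m' (\<lambda>x. deriv h x * g x)" using Flat_mult[OF _ sg Fdh] sh smooth_deriv by blast
    have F2: "Flat m' (\<lambda>x. h x * (- deriv g x))"
      using Flat_mult[OF sh _ Fh'] sg smooth_deriv smooth_uminus by blast
    then have F2': "Flat m' (\<lambda>x. (- deriv g x) * h x)" by (simp add: mult.commute)
    have F3: "Flat m' (\<lambda>x. deriv h x * g x + (- deriv g x) * h x)"
      using Flat_add[OF s1 s2 F1 F2'] .
    have s4: "smooth (\<lambda>x. 1 / (f x * g x))"
      using smooth_inverse smooth_mult sf sg fp gp by (simp add: smooth_inverse smooth_mult)
    have "Flat m' (deriv u)" unfolding du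
      using Flat_mult[OF smooth_add[OF s1 s2] s4 F3] .
    then show ?thesis unfolding Suc Flat_Suc by (simp add: u_def f0)
  qed
  then have "(deriv^^m) u 0 = 0" by (simp add: Flat_def)
  then show ?thesis unfolding u_def deriv_iter_diff[OF slf slg] by simp
qed

definition Mj :: "(real \<Rightarrow> real) \<Rightarrow> nat \<Rightarrow> real \<Rightarrow> real" where
  "Mj X j t = integral {0..1} (\<lambda>\<omega>. X \<omega> ^ j * exp (t * X \<omega>))"

lemma Mj_DERIV:
  assumes X: "continuous_on UNIV X"
  shows "(Mj X j has_real_derivative Mj X (Suc j) t) (at t)"
proof -
  have cX: "continuous_on S X" for S using X continuous_on_subset by blast
  have "((\<lambda>x. integral (cbox 0 1) (\<lambda>\<omega>. X \<omega> ^ j * exp (x * X \<omega>))) has_field_derivative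
        integral (cbox 0 1) (\<lambda>\<omega>. X \<omega> ^ Suc j * exp (t * X \<omega>))) (at t within UNIV)"
  proof (rule leibniz_rule_field_derivative[where fx = "\<lambda>x \<omega>. X \<omega> ^ Suc j * exp (x * X \<omega>)"])
    fix x :: real and \<omega> :: real
    show "((\<lambda>x. X \<omega> ^ j * exp (x * X \<omega>)) has_field_derivative X \<omega> ^ Suc j * exp (x * X \<omega>)) (at x within UNIV)"
      by (auto intro!: derivative_eq_intros)
  next
    fix x :: real
    show "(\<lambda>\<omega>. X \<omega> ^ j * exp (x * X \<omega>)) integrable_on cbox 0 1"
      unfolding cbox_interval
      by (intro integrable_continuous_real continuous_intros cX)
  next
    show "continuous_on (UNIV \<times> cbox 0 1) (\<lambda>(x, \<omega>). X \<omega> ^ Suc j * exp (x * X \<omega>))"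
    proof -
      have c2: "continuous_on (UNIV \<times> cbox 0 1) (\<lambda>p. X (snd p))"
        by (rule continuous_on_compose2[OF X]) (auto intro: continuous_intros)
      show ?thesis unfolding case_prod_unfold
        by (intro continuous_intros c2)
    qed
  qed auto
  then show ?thesis unfolding Mj_def cbox_interval by simp
qed

lemma Mj_iter:
  assumes X: "continuous_on UNIV X"
  shows "(deriv^^j) (Mj X 0) = Mj X j"
proof (induction j)
  case 0 then show ?case by simp
next
  case (Suc j)
  show ?case using Mj_DERIV[OF X] Suc by (auto intro!: ext DERIV_imp_deriv)
qed

lemma Mj_smooth:
  assumes X: "continuous_on UNIV X"
  shows "smooth (Mj X 0)"
  unfolding smooth_def Ck_def
  using Mj_iter[OF X] Mj_DERIV[OF X] by (simp del: funpow.simps)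

lemma Mj_0_at0:
  assumes X: "continuous_on UNIV X"
  shows "(deriv^^j) (Mj X 0) 0 = integral {0..1} (\<lambda>\<omega>. X \<omega> ^ j)"
  using Mj_iter[OF X] by (simp add: Mj_def)

lemma Mj_pos:
  assumes X: "continuous_on UNIV X" and B: "\<forall>\<omega>. \<bar>X \<omega>\<bar> \<le> B"
  shows "Mj X 0 t > 0"
proof -
  have cX: "continuous_on S X" for S using X continuous_on_subset by blast
  have le: "- (\<bar>t\<bar> * B) \<le> t * X \<omega>" for \<omega>
  proof -
    have "\<bar>t * X \<omega>\<bar> \<le> \<bar>t\<bar> * B" using B by (simp add: abs_mult mult_left_mono)
    then show ?thesis by linarith
  qed
  have "integral {0..1::real} (\<lambda>\<omega>. exp (- \<bar>t\<bar> * B)) \<le> integral {0..1} (\<lambda>\<omega>. exp (t * X \<omega>))"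
    by (rule integral_le) (auto intro!: integrable_continuous_real continuous_intros cX simp: le)
  moreover have "integral {0..1::real} (\<lambda>\<omega>. exp (- \<bar>t\<bar> * B)) = exp (- \<bar>t\<bar> * B)" by simp
  ultimately have "integral {0..1} (\<lambda>\<omega>. exp (t * X \<omega>)) > 0"
    by (smt (verit) exp_gt_zero)
  then show ?thesis unfolding Mj_def by simp
qed

lemma mgf01_eq:
  assumes X: "continuous_on UNIV X"
  shows "mgf01 X = Mj X 0"
proof
  fix t
  have cX: "continuous_on S X" for S using X continuous_on_subset by blast
  have "continuous_on {0..1} (\<lambda>\<omega>. exp (t * X \<omega>))" by (intro continuous_intros cX)
  then show "mgf01 X t = Mj X 0 t"
    unfolding mgf01_def Mj_def
    by (simp add: lebesgue_integral_eq_integral continuous_imp_integrable_real)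
qed

lemma int_cos:
  fixes z :: int
  shows "integral {0..1} (\<lambda>\<omega>. cos (2 * pi * real_of_int z * \<omega>)) = (if z = 0 then 1 else 0)"
proof (cases "z = 0")
  case True then show ?thesis by simp
next
  case False
  define F where "F = (\<lambda>\<omega>::real. sin (2 * pi * real_of_int z * \<omega>) / (2 * pi * real_of_int z))"
  have "((\<lambda>\<omega>. cos (2 * pi * real_of_int z * \<omega>)) has_integral (F 1 - F 0)) {0..1}"
  proof (rule fundamental_theorem_of_calculus)
    fix x :: real
    show "(F has_vector_derivative cos (2 * pi * real_of_int z * x)) (at x within {0..1})"
      unfolding F_def has_real_derivative_iff_has_vector_derivative[symmetric]
      using False by (auto intro!: derivative_eq_intros simp: field_simps)
  qed simp
  moreover have "F 1 = 0"
  proof -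
    have "sin (2 * pi * real_of_int z) = 0" by (rule sin_integer_2pi) simp
    then show ?thesis by (simp add: F_def)
  qed
  moreover have "F 0 = 0" by (simp add: F_def)
  ultimately show ?thesis using False by (simp add: integral_unique)
qed

lemma cos_power_expand:
  fixes x :: real
  shows "cos x ^ r = (1 / 2 ^ r) * (\<Sum>s\<le>r. real (r choose s) * cos ((real (2 * s) - real r) * x))"
proof -
  define c where "c = cis x"
  have cc: "complex_of_real (cos x) = (c + inverse c) / 2"
    unfolding c_def by (simp add: cis.ctr complex_eq_iff)
  have "complex_of_real (cos x ^ r) = ((c + inverse c) / 2) ^ r" by (simp only: of_real_power cc)
  also have "\<dots> = (1 / 2 ^ r) * (c + inverse c) ^ r" by (simp add: power_divide)
  also have "(c + inverse c) ^ r = (\<Sum>s\<le>r. of_nat (r choose s) * c ^ s * inverse c ^ (r - s))"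
    by (simp add: binomial_ring)
  also have "\<dots> = (\<Sum>s\<le>r. of_nat (r choose s) * cis ((real (2 * s) - real r) * x))"
  proof (rule sum.cong)
    fix s assume "s \<in> {..r}"
    then have sr: "s \<le> r" by simp
    have "c ^ s * inverse c ^ (r - s) = cis (real s * x) * cis (real (r - s) * (- x))"
      unfolding c_def by (simp add: Complex.DeMoivre)
    also have "\<dots> = cis ((real (2 * s) - real r) * x)"
      using sr by (simp add: cis_mult of_nat_diff algebra_simps)
    finally show "of_nat (r choose s) * c ^ s * inverse c ^ (r - s) = of_nat (r choose s) * cis ((real (2 * s) - real r) * x)"
      by (simp add: mult.assoc)
  qed simp
  finally have "complex_of_real (cos x ^ r) = (1 / 2 ^ r) * (\<Sum>s\<le>r. of_nat (r choose s) * cis ((real (2 * s) - real r) * x))" .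
  then have "Re (complex_of_real (cos x ^ r)) = Re ((1 / 2 ^ r) * (\<Sum>s\<le>r. of_nat (r choose s) * cis ((real (2 * s) - real r) * x)))"
    by simp
  also have "\<dots> = (1 / 2 ^ r) * (\<Sum>s\<le>r. real (r choose s) * cos ((real (2 * s) - real r) * x))"
  proof -
    have "(1 / 2 ^ r :: complex) = complex_of_real (1 / 2 ^ r)" by simp
    then show ?thesis by (simp only:) (simp add: Re_sum)
  qed
  finally show ?thesis by simp
qed

fun sumset :: "int set \<Rightarrow> nat \<Rightarrow> int set" where
  "sumset A 0 = {0}"
| "sumset A (Suc i) = {z + y | z y. z \<in> sumset A i \<and> y \<in> A}"

lemma sumset_SucI: "z \<in> sumset A i \<Longrightarrow> y \<in> A \<Longrightarrow> z + y \<in> sumset A (Suc i)"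
  by auto

definition Aset :: "(nat \<Rightarrow> nat) \<Rightarrow> nat \<Rightarrow> int set" where
  "Aset a n = {int (a k) | k. k \<in> {1..n}} \<union> {- int (a k) | k. k \<in> {1..n}}"

lemma cont_S: "continuous_on A (S a n)"
  unfolding S_def by (intro continuous_intros)

lemma vanish:
  "\<forall>w::int. w \<notin> sumset (Aset a n) i \<longrightarrow> - w \<notin> sumset (Aset a n) i \<longrightarrow>
     integral {0..1} (\<lambda>\<omega>. S a n \<omega> ^ i * cos (2 * pi * real_of_int w * \<omega>)) = 0"
proof (induction i)
  case 0
  show ?case using int_cos by auto
next
  case (Suc i)
  show ?case
  proof (intro allI impI)
    fix w :: int
    assume w1: "w \<notin> sumset (Aset a n) (Suc i)" and w2: "- w \<notin> sumset (Aset a n) (Suc i)"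
    have ev: "\<And>\<omega>. S a n \<omega> ^ Suc i * cos (2 * pi * real_of_int w * \<omega>) =
       (\<Sum>k=1..n. (1/2) * (S a n \<omega> ^ i * cos (2 * pi * real_of_int (w - int (a k)) * \<omega>))
                 + (1/2) * (S a n \<omega> ^ i * cos (2 * pi * real_of_int (w + int (a k)) * \<omega>)))"
    proof -
      fix \<omega>
      have eq2: "S a n \<omega> * cos (2 * pi * real_of_int w * \<omega>) = (\<Sum>k=1..n. cos (2 * pi * real (a k) * \<omega>) * cos (2 * pi * real_of_int w * \<omega>))"
        by (simp only: S_def sum_distrib_right)
      have eq3: "(\<Sum>k=1..n. cos (2 * pi * real (a k) * \<omega>) * cos (2 * pi * real_of_int w * \<omega>)) = (\<Sum>k=1..n. (1/2) * cos (2 * pi * real_of_int (w - int (a k)) * \<omega>)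
                 + (1/2) * cos (2 * pi * real_of_int (w + int (a k)) * \<omega>))"
        by (intro sum.cong refl)
           (simp add: cos_times_cos algebra_simps add_divide_distrib)
      have "S a n \<omega> ^ Suc i * cos (2 * pi * real_of_int w * \<omega>) =
         S a n \<omega> ^ i * (S a n \<omega> * cos (2 * pi * real_of_int w * \<omega>))"
        by (simp add: algebra_simps)
      also have "\<dots> = S a n \<omega> ^ i * (\<Sum>k=1..n. (1/2) * cos (2 * pi * real_of_int (w - int (a k)) * \<omega>)
                 + (1/2) * cos (2 * pi * real_of_int (w + int (a k)) * \<omega>))"
        unfolding eq2 eq3 ..
      finally show "S a n \<omega> ^ Suc i * cos (2 * pi * real_of_int w * \<omega>) =
       (\<Sum>k=1..n. (1/2) * (S a n \<omega> ^ i * cos (2 * pi * real_of_int (w - int (a k)) * \<omega>))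
                 + (1/2) * (S a n \<omega> ^ i * cos (2 * pi * real_of_int (w + int (a k)) * \<omega>)))"
        by (simp add: sum_distrib_left algebra_simps)
    qed
    have cS: "continuous_on {0..1} (S a n)" by (rule cont_S)
    have intg: "\<And>v. (\<lambda>\<omega>. S a n \<omega> ^ i * cos (2 * pi * real_of_int v * \<omega>)) integrable_on {0..1}"
      by (intro integrable_continuous_real continuous_intros cS)
    have z: "integral {0..1} (\<lambda>\<omega>. S a n \<omega> ^ i * cos (2 * pi * real_of_int (w - int (a k)) * \<omega>)) = 0"
      and z': "integral {0..1} (\<lambda>\<omega>. S a n \<omega> ^ i * cos (2 * pi * real_of_int (w + int (a k)) * \<omega>)) = 0"
      if k: "k \<in> {1..n}" for k
    proof -
      have A1: "int (a k) \<in> Aset a n" "- int (a k) \<in> Aset a n" using k unfolding Aset_def by blast+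
      have "w - int (a k) \<notin> sumset (Aset a n) i"
      proof
        assume "w - int (a k) \<in> sumset (Aset a n) i"
        then have "(w - int (a k)) + int (a k) \<in> sumset (Aset a n) (Suc i)" using A1 sumset_SucI by blast
        then show False using w1 by simp
      qed
      moreover have "- (w - int (a k)) \<notin> sumset (Aset a n) i"
      proof
        assume "- (w - int (a k)) \<in> sumset (Aset a n) i"
        then have "- (w - int (a k)) + - int (a k) \<in> sumset (Aset a n) (Suc i)" using A1 sumset_SucI by blast
        then show False using w2 by simp
      qed
      moreover have "w + int (a k) \<notin> sumset (Aset a n) i"
      proof
        assume "w + int (a k) \<in> sumset (Aset a n) i"
        then have "(w + int (a k)) + - int (a k) \<in> sumset (Aset a n) (Suc i)" using A1 sumset_SucI by blast
        then show False using w1 by simp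
      qed
      moreover have "- (w + int (a k)) \<notin> sumset (Aset a n) i"
      proof
        assume "- (w + int (a k)) \<in> sumset (Aset a n) i"
        then have "- (w + int (a k)) + int (a k) \<in> sumset (Aset a n) (Suc i)" using A1 sumset_SucI by blast
        then show False using w2 by simp
      qed
      ultimately show "integral {0..1} (\<lambda>\<omega>. S a n \<omega> ^ i * cos (2 * pi * real_of_int (w - int (a k)) * \<omega>)) = 0"
        "integral {0..1} (\<lambda>\<omega>. S a n \<omega> ^ i * cos (2 * pi * real_of_int (w + int (a k)) * \<omega>)) = 0"
        using Suc.IH by blast+
    qed
    have "integral {0..1} (\<lambda>\<omega>. S a n \<omega> ^ Suc i * cos (2 * pi * real_of_int w * \<omega>)) =
      (\<Sum>k=1..n. integral {0..1} (\<lambda>\<omega>. (1/2) * (S a n \<omega> ^ i * cos (2 * pi * real_of_int (w - int (a k)) * \<omega>))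
                 + (1/2) * (S a n \<omega> ^ i * cos (2 * pi * real_of_int (w + int (a k)) * \<omega>))))"
      unfolding ev
      by (rule integral_sum) (auto intro!: integrable_add integrable_cmul intg simp del: of_int_add of_int_diff)
    also have "\<dots> = (\<Sum>k=1..n. 0)"
    proof (rule sum.cong)
      fix k assume k: "k \<in> {1..n}"
      have "integral {0..1} (\<lambda>\<omega>. (1/2) * (S a n \<omega> ^ i * cos (2 * pi * real_of_int (w - int (a k)) * \<omega>))
                 + (1/2) * (S a n \<omega> ^ i * cos (2 * pi * real_of_int (w + int (a k)) * \<omega>))) =
            integral {0..1} (\<lambda>\<omega>. (1/2) * (S a n \<omega> ^ i * cos (2 * pi * real_of_int (w - int (a k)) * \<omega>)))
            + integral {0..1} (\<lambda>\<omega>. (1/2) * (S a n \<omega> ^ i * cos (2 * pi * real_of_int (w + int (a k)) * \<omega>)))"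
        by (rule integral_add) (auto intro!: integrable_cmul intg simp del: of_int_add of_int_diff)
      also have "\<dots> = 0"
        using z[OF k] z'[OF k] by (simp del: of_int_add of_int_diff)
      finally show "integral {0..1} (\<lambda>\<omega>. (1/2) * (S a n \<omega> ^ i * cos (2 * pi * real_of_int (w - int (a k)) * \<omega>))
                 + (1/2) * (S a n \<omega> ^ i * cos (2 * pi * real_of_int (w + int (a k)) * \<omega>))) = 0" .
    qed simp
    finally show "integral {0..1} (\<lambda>\<omega>. S a n \<omega> ^ Suc i * cos (2 * pi * real_of_int w * \<omega>)) = 0" by simp
  qed
qed

definition cm :: "nat \<Rightarrow> real" where
  "cm r = (1 / 2 ^ r) * (\<Sum>s\<le>r. real (r choose s) * (if 2 * s = r then 1 else 0))"

lemma decor: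
  fixes b :: int
  assumes hyp: "\<forall>q::int. q \<noteq> 0 \<longrightarrow> \<bar>q\<bar> \<le> int r \<longrightarrow> q * b \<notin> sumset (Aset a n) i"
  shows "integral {0..1} (\<lambda>\<omega>. S a n \<omega> ^ i * cos (2 * pi * real_of_int b * \<omega>) ^ r)
         = cm r * integral {0..1} (\<lambda>\<omega>. S a n \<omega> ^ i)"
proof -
  define q where "q = (\<lambda>s::nat. int (2 * s) - int r)"
  have ex: "S a n \<omega> ^ i * cos (2 * pi * real_of_int b * \<omega>) ^ r =
     (\<Sum>s\<le>r. (real (r choose s) / 2 ^ r) * (S a n \<omega> ^ i * cos (2 * pi * real_of_int (q s * b) * \<omega>)))" for \<omega>
  proof -
    have "cos (2 * pi * real_of_int b * \<omega>) ^ r = (1 / 2 ^ r) * (\<Sum>s\<le>r. real (r choose s) * cos ((real (2 * s) - real r) * (2 * pi * real_of_int b * \<omega>)))"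
      by (rule cos_power_expand)
    also have "\<dots> = (1 / 2 ^ r) * (\<Sum>s\<le>r. real (r choose s) * cos (2 * pi * real_of_int (q s * b) * \<omega>))"
      unfolding q_def by (intro arg_cong[where f="\<lambda>x. (1 / 2 ^ r) * x"] sum.cong refl) (simp add: algebra_simps)
    finally show ?thesis by (simp add: sum_distrib_left sum_distrib_right algebra_simps)
  qed
  have cS: "continuous_on {0..1} (S a n)" by (rule cont_S)
  have intg: "\<And>v. (\<lambda>\<omega>. S a n \<omega> ^ i * cos (2 * pi * real_of_int v * \<omega>)) integrable_on {0..1}"
    by (intro integrable_continuous_real continuous_intros cS)
  have "integral {0..1} (\<lambda>\<omega>. S a n \<omega> ^ i * cos (2 * pi * real_of_int b * \<omega>) ^ r) =
     (\<Sum>s\<le>r. integral {0..1} (\<lambda>\<omega>. (real (r choose s) / 2 ^ r) * (S a n \<omega> ^ i * cos (2 * pi * real_of_int (q s * b) * \<omega>))))"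
    unfolding ex by (rule integral_sum) (auto intro!: integrable_cmul intg simp del: of_int_mult)
  also have "\<dots> = (\<Sum>s\<le>r. (real (r choose s) / 2 ^ r) * (if 2 * s = r then integral {0..1} (\<lambda>\<omega>. S a n \<omega> ^ i) else 0))"
  proof (rule sum.cong)
    fix s assume s: "s \<in> {..r}"
    show "integral {0..1} (\<lambda>\<omega>. (real (r choose s) / 2 ^ r) * (S a n \<omega> ^ i * cos (2 * pi * real_of_int (q s * b) * \<omega>))) =
      (real (r choose s) / 2 ^ r) * (if 2 * s = r then integral {0..1} (\<lambda>\<omega>. S a n \<omega> ^ i) else 0)"
    proof (cases "2 * s = r")
      case True
      then have "q s = 0" unfolding q_def by simp
      then show ?thesis using True by simp
    next
      case False
      then have qn: "q s \<noteq> 0" unfolding q_def by simp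
      have qb: "\<bar>q s\<bar> \<le> int r" using s unfolding q_def by auto
      have "q s * b \<notin> sumset (Aset a n) i" using hyp qn qb by blast
      moreover have "- (q s * b) \<notin> sumset (Aset a n) i"
        using hyp[rule_format, of "- q s"] qn qb by simp
      ultimately have "integral {0..1} (\<lambda>\<omega>. S a n \<omega> ^ i * cos (2 * pi * real_of_int (q s * b) * \<omega>)) = 0"
        using vanish by blast
      then show ?thesis using False by (simp del: of_int_mult)
    qed
  qed simp
  also have "\<dots> = cm r * integral {0..1} (\<lambda>\<omega>. S a n \<omega> ^ i)"
    unfolding cm_def by (simp add: sum_distrib_left sum_distrib_right algebra_simps if_distrib cong: if_cong)
  finally show ?thesis .
qed

lemma cos_moment:
  fixes b :: int
  assumes "b \<noteq> 0"
  shows "integral {0..1} (\<lambda>\<omega>. cos (2 * pi * real_of_int b * \<omega>) ^ r) = cm r"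
  using decor[of r b a 0 0] assms by simp

lemma S_Suc: "S a (Suc n) \<omega> = S a n \<omega> + cos (2 * pi * real (a (Suc n)) * \<omega>)"
  unfolding S_def by simp

lemma S_bound: "\<bar>S a n \<omega>\<bar> \<le> real n"
proof -
  have "\<bar>S a n \<omega>\<bar> \<le> (\<Sum>k=1..n. \<bar>cos (2 * pi * real (a k) * \<omega>)\<bar>)"
    unfolding S_def by (rule sum_abs)
  also have "\<dots> \<le> (\<Sum>k=1..n. 1)" by (intro sum_mono) simp
  finally show ?thesis by simp
qed

lemma moment_Suc:
  assumes hyp: "\<forall>i\<le>j. \<forall>q::int. q \<noteq> 0 \<longrightarrow> \<bar>q\<bar> \<le> int j \<longrightarrow> q * int (a (Suc n)) \<notin> sumset (Aset a n) i"
  shows "integral {0..1} (\<lambda>\<omega>. S a (Suc n) \<omega> ^ j) =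
     (\<Sum>i\<le>j. real (j choose i) * integral {0..1} (\<lambda>\<omega>. S a n \<omega> ^ i) * cm (j - i))"
proof -
  have cS: "continuous_on {0..1} (S a n)" by (rule cont_S)
  have ex: "S a (Suc n) \<omega> ^ j = (\<Sum>i\<le>j. real (j choose i) * (S a n \<omega> ^ i * cos (2 * pi * real_of_int (int (a (Suc n))) * \<omega>) ^ (j - i)))" for \<omega>
    unfolding S_Suc binomial_ring by (simp add: algebra_simps)
  have "integral {0..1} (\<lambda>\<omega>. S a (Suc n) \<omega> ^ j) =
     (\<Sum>i\<le>j. integral {0..1} (\<lambda>\<omega>. real (j choose i) * (S a n \<omega> ^ i * cos (2 * pi * real_of_int (int (a (Suc n))) * \<omega>) ^ (j - i))))"
    unfolding ex by (rule integral_sum) (auto intro!: integrable_cmul integrable_continuous_real continuous_intros cS simp del: of_int_of_nat_eq)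
  also have "\<dots> = (\<Sum>i\<le>j. real (j choose i) * integral {0..1} (\<lambda>\<omega>. S a n \<omega> ^ i) * cm (j - i))"
  proof (rule sum.cong)
    fix i assume i: "i \<in> {..j}"
    have "\<forall>q::int. q \<noteq> 0 \<longrightarrow> \<bar>q\<bar> \<le> int (j - i) \<longrightarrow> q * int (a (Suc n)) \<notin> sumset (Aset a n) i"
      using hyp i by auto
    from decor[OF this]
    show "integral {0..1} (\<lambda>\<omega>. real (j choose i) * (S a n \<omega> ^ i * cos (2 * pi * real_of_int (int (a (Suc n))) * \<omega>) ^ (j - i))) =
       real (j choose i) * integral {0..1} (\<lambda>\<omega>. S a n \<omega> ^ i) * cm (j - i)"
      by (simp only: Henstock_Kurzweil_Integration.integral_mult_right) simp
  qed simp
  finally show ?thesis .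
qed

definition C1 :: "real \<Rightarrow> real" where "C1 \<omega> = cos (2 * pi * \<omega>)"

lemma C1_cont: "continuous_on A C1" unfolding C1_def by (intro continuous_intros)

lemma C1_moment: "integral {0..1} (\<lambda>\<omega>. C1 \<omega> ^ r) = cm r"
  using cos_moment[of 1 r] unfolding C1_def by simp

lemma cumulant_eq: "continuous_on UNIV X \<Longrightarrow> cumulant01 m X = (deriv^^m) (\<lambda>t. ln (Mj X 0 t)) 0"
  unfolding cumulant01_def using mgf01_eq by simp

lemma cumulant_step:
  assumes hyp: "\<forall>i\<le>m. \<forall>q::int. q \<noteq> 0 \<longrightarrow> \<bar>q\<bar> \<le> int m \<longrightarrow> q * int (a (Suc n)) \<notin> sumset (Aset a n) i"
  shows "cumulant01 m (S a (Suc n)) = cumulant01 m (S a n) + (deriv^^m) (\<lambda>t. ln (Mj C1 0 t)) 0"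
proof -
  have cSn: "continuous_on UNIV (S a n)" and cSn1: "continuous_on UNIV (S a (Suc n))" by (rule cont_S)+
  define f where "f = Mj (S a (Suc n)) 0"
  define M1 where "M1 = Mj (S a n) 0"
  define M2 where "M2 = Mj C1 0"
  have sf: "smooth f" unfolding f_def by (rule Mj_smooth[OF cSn1])
  have sM1: "smooth M1" unfolding M1_def by (rule Mj_smooth[OF cSn])
  have sM2: "smooth M2" unfolding M2_def by (rule Mj_smooth[OF C1_cont])
  have pf: "\<forall>t. f t > 0" unfolding f_def using Mj_pos[OF cSn1] S_bound by blast
  have pM1: "\<forall>t. M1 t > 0" unfolding M1_def using Mj_pos[OF cSn] S_bound by blast
  have pM2: "\<forall>t. M2 t > 0" unfolding M2_def
    by (intro allI Mj_pos[OF C1_cont, of 1]) (simp add: C1_def)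
  have sg: "smooth (\<lambda>t. M1 t * M2 t)" using sM1 sM2 smooth_mult by blast
  have pg: "\<forall>t. M1 t * M2 t > 0" using pM1 pM2 by simp
  have eq: "\<forall>j\<le>m. (deriv^^j) f 0 = (deriv^^j) (\<lambda>t. M1 t * M2 t) 0"
  proof (intro allI impI)
    fix j assume j: "j \<le> m"
    have "(deriv^^j) f 0 = integral {0..1} (\<lambda>\<omega>. S a (Suc n) \<omega> ^ j)"
      unfolding f_def by (rule Mj_0_at0[OF cSn1])
    also have "\<dots> = (\<Sum>i\<le>j. real (j choose i) * integral {0..1} (\<lambda>\<omega>. S a n \<omega> ^ i) * cm (j - i))"
      by (rule moment_Suc) (use hyp j in force)
    also have "\<dots> = (\<Sum>i=0..j. real (j choose i) * (deriv^^i) M1 0 * (deriv^^(j - i)) M2 0)"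
      unfolding M1_def M2_def Mj_0_at0[OF cSn] Mj_0_at0[OF C1_cont] C1_moment atMost_atLeast0 ..
    also have "\<dots> = (deriv^^j) (\<lambda>t. M1 t * M2 t) 0"
      by (rule leibniz_smooth[OF sM1 sM2, symmetric])
    finally show "(deriv^^j) f 0 = (deriv^^j) (\<lambda>t. M1 t * M2 t) 0" .
  qed
  have "cumulant01 m (S a (Suc n)) = (deriv^^m) (\<lambda>t. ln (f t)) 0"
    unfolding f_def by (rule cumulant_eq[OF cSn1])
  also have "\<dots> = (deriv^^m) (\<lambda>t. ln (M1 t * M2 t)) 0"
    by (rule log_jet[OF sf sg pf pg eq])
  also have "(\<lambda>t. ln (M1 t * M2 t)) = (\<lambda>t. ln (M1 t) + ln (M2 t))"
    using pM1 pM2 by (intro ext) (simp add: ln_mult_pos)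
  also have "(deriv^^m) (\<lambda>t. ln (M1 t) + ln (M2 t)) 0 = (deriv^^m) (\<lambda>t. ln (M1 t)) 0 + (deriv^^m) (\<lambda>t. ln (M2 t)) 0"
    using deriv_iter_add[OF smooth_ln[OF sM1 pM1] smooth_ln[OF sM2 pM2]] by simp
  also have "(deriv^^m) (\<lambda>t. ln (M1 t)) 0 = cumulant01 m (S a n)"
    unfolding M1_def by (rule cumulant_eq[OF cSn, symmetric])
  finally show ?thesis unfolding M2_def .
qed

lemma cm_eq: "cm r = (if even r then real (r choose (r div 2)) / 2 ^ r else 0)"
proof (cases "even r")
  case True
  have "(\<Sum>s\<le>r. real (r choose s) * (if 2 * s = r then 1 else 0)) = (\<Sum>s\<le>r. (if s = r div 2 then real (r choose s) else 0))"
    using True by (intro sum.cong refl) auto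
  also have "\<dots> = real (r choose (r div 2))" by (simp add: sum.delta)
  finally show ?thesis using True unfolding cm_def by simp
next
  case False
  have "(\<Sum>s\<le>r. real (r choose s) * (if 2 * s = r then 1 else 0)) = 0"
    using False by (intro sum.neutral) auto
  then show ?thesis using False unfolding cm_def by simp
qed

lemma bessel_sums: "(\<lambda>r. t ^ r / fact r * cm r) sums Mj C1 0 t"
proof -
  define f where "f = (\<lambda>K \<omega>. \<Sum>r<K. (t * C1 \<omega>) ^ r / fact r)"
  have cC: "continuous_on {0..1} C1" by (rule C1_cont)
  have fi: "\<And>K. f K integrable_on {0..1}"
    unfolding f_def by (auto intro!: integrable_continuous_real continuous_intros cC)
  have hi: "(\<lambda>\<omega>. exp \<bar>t\<bar>) integrable_on {0..1::real}" by (rule integrable_on_const) simp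
  have sabs: "summable (\<lambda>r. \<bar>t\<bar> ^ r / fact r)"
    using exp_converges[of "\<bar>t\<bar>"] by (simp add: sums_iff divide_inverse mult.commute)
  have le: "norm (f K \<omega>) \<le> exp \<bar>t\<bar>" if "\<omega> \<in> {0..1}" for K \<omega>
  proof -
    have "norm (f K \<omega>) \<le> (\<Sum>r<K. \<bar>(t * C1 \<omega>) ^ r / fact r\<bar>)"
      unfolding f_def real_norm_def by (rule sum_abs)
    also have "\<dots> \<le> (\<Sum>r<K. \<bar>t\<bar> ^ r / fact r)"
    proof (intro sum_mono)
      fix r
      have "\<bar>C1 \<omega>\<bar> \<le> 1" unfolding C1_def by simp
      then have "\<bar>t * C1 \<omega>\<bar> ^ r \<le> \<bar>t\<bar> ^ r"
        by (intro power_mono) (auto simp: abs_mult mult_left_le)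
      then show "\<bar>(t * C1 \<omega>) ^ r / fact r\<bar> \<le> \<bar>t\<bar> ^ r / fact r"
        by (simp add: power_abs divide_right_mono)
    qed
    also have "\<dots> \<le> (\<Sum>r. \<bar>t\<bar> ^ r / fact r)"
      by (rule sum_le_suminf[OF sabs]) auto
    also have "\<dots> = exp \<bar>t\<bar>"
      using exp_converges[of "\<bar>t\<bar>"] by (simp add: sums_iff divide_inverse mult.commute)
    finally show ?thesis .
  qed
  have conv: "(\<lambda>K. f K \<omega>) \<longlonglongrightarrow> exp (t * C1 \<omega>)" for \<omega>
    using exp_converges[of "t * C1 \<omega>"] unfolding sums_def f_def by (simp add: divide_inverse mult.commute)
  have lim: "(\<lambda>K. integral {0..1} (f K)) \<longlonglongrightarrow> integral {0..1} (\<lambda>\<omega>. exp (t * C1 \<omega>))"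
    by (rule dominated_convergence(2)[OF fi hi le conv]) auto
  have "integral {0..1} (f K) = (\<Sum>r<K. t ^ r / fact r * cm r)" for K
  proof -
    have "integral {0..1} (f K) = (\<Sum>r<K. integral {0..1} (\<lambda>\<omega>. (t ^ r / fact r) * C1 \<omega> ^ r))"
      unfolding f_def by (subst integral_sum) (auto intro!: integrable_continuous_real continuous_intros cC simp: power_mult_distrib)
    also have "\<dots> = (\<Sum>r<K. t ^ r / fact r * cm r)"
      by (simp only: Henstock_Kurzweil_Integration.integral_mult_right C1_moment)
    finally show ?thesis .
  qed
  then show ?thesis using lim unfolding sums_def Mj_def by simp
qed

lemma besselI0_eq: "besselI0 = Mj C1 0"
proof
  fix t
  have "(\<lambda>j. t ^ (2 * j) / fact (2 * j) * cm (2 * j)) sums Mj C1 0 t"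
  proof (subst sums_mono_reindex[where g = "\<lambda>j. 2 * j"])
    show "strict_mono (\<lambda>j::nat. 2 * j)" by (rule strict_monoI) simp
    show "\<And>n. n \<notin> range (\<lambda>j::nat. 2 * j) \<Longrightarrow> t ^ n / fact n * cm n = 0"
      by (auto simp: cm_eq elim!: evenE)
    show "(\<lambda>r. t ^ r / fact r * cm r) sums Mj C1 0 t" by (rule bessel_sums)
  qed
  moreover have "t ^ (2 * j) / fact (2 * j) * cm (2 * j) = (t / 2) ^ (2 * j) / (fact j)^2" for j
  proof -
    have "cm (2 * j) = real ((2 * j) choose j) / 2 ^ (2 * j)" by (simp add: cm_eq)
    also have "real ((2 * j) choose j) = fact (2 * j) / (fact j * fact j)"
      by (subst binomial_fact) (auto simp: mult_2)
    finally show ?thesis by (simp add: power2_eq_square power_divide field_simps)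
  qed
  ultimately have "(\<lambda>j. (t / 2) ^ (2 * j) / (fact j)^2) sums Mj C1 0 t" by simp
  then show "besselI0 t = Mj C1 0 t" unfolding besselI0_def by (simp add: sums_iff)
qed

lemma arcsine_eq: "arcsine_cumulant m = (deriv^^m) (\<lambda>t. ln (Mj C1 0 t)) 0"
  unfolding arcsine_cumulant_def besselI0_eq ..

definition Hs :: "(nat \<Rightarrow> nat) \<Rightarrow> int poly \<Rightarrow> nat \<Rightarrow> real" where
  "Hs a h N = (\<Sum>d\<le>degree h. real_of_int (coeff h d) * real (a (N - d)))"

lemma Hs_ext: "degree h \<le> D \<Longrightarrow> Hs a h N = (\<Sum>d\<le>D. real_of_int (coeff h d) * real (a (N - d)))"
  unfolding Hs_def
  by (rule sum.mono_neutral_left) (auto simp: coeff_eq_0)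

lemma Hs_shift: "Hs a (h + monom e d) N = Hs a h N + real_of_int e * real (a (N - d))"
proof -
  define D where "D = max (degree h) d"
  have d1: "degree h \<le> D" unfolding D_def by simp
  have d2: "degree (h + monom e d) \<le> D"
    unfolding D_def by (meson degree_add_le degree_monom_le max.cobounded1 max.cobounded2 order_trans)
  have "Hs a (h + monom e d) N = (\<Sum>i\<le>D. real_of_int (coeff h i) * real (a (N - i)) + (if i = d then real_of_int e * real (a (N - d)) else 0))"
    unfolding Hs_ext[OF d2] by (intro sum.cong refl) (auto simp: coeff_monom algebra_simps)
  also have "\<dots> = Hs a h N + real_of_int e * real (a (N - d))"
    unfolding Hs_ext[OF d1] sum.distrib using D_def by (simp add: sum.delta)
  finally show ?thesis .
qed

lemma Hs_const: "Hs a [:q:] N = real_of_int q * real (a N)"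
  unfolding Hs_def by simp

locale lacun =
  fixes a :: "nat \<Rightarrow> nat" and \<eta> :: real
  assumes pos: "\<forall>k\<ge>1. 0 < a k"
    and incr: "\<forall>k\<ge>1. a k < a (Suc k)"
    and lim: "(\<lambda>k. real (a (Suc k)) / real (a k)) \<longlonglongrightarrow> \<eta>"
    and eta_gt: "\<eta> > 1"
    and transc: "\<not> algebraic \<eta>"
begin

lemma a_mono:
  assumes "1 \<le> k" "k \<le> k'" shows "a k \<le> a k'"
  using assms(2)
proof (induction k' rule: dec_induct)
  case base then show ?case by simp
next
  case (step n)
  then have "a n < a (Suc n)" using incr assms(1) by auto
  then show ?case using step by simp
qed

lemma ev_pos: "eventually (\<lambda>N. real (a (N - d)) > 0) sequentially"
  unfolding eventually_sequentially
  by (rule exI[of _ "Suc d"]) (use pos in auto)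

lemma ratio_lim: "(\<lambda>N. real (a (N - d)) / real (a N)) \<longlonglongrightarrow> (1 / \<eta>) ^ d"
proof (induction d)
  case 0
  have "eventually (\<lambda>N. real (a (N - 0)) / real (a N) = 1) sequentially"
    using ev_pos[of 0] by eventually_elim simp
  then show ?case by (simp add: tendsto_cong)
next
  case (Suc d)
  have r: "(\<lambda>N. real (a (Suc (N - Suc d))) / real (a (N - Suc d))) \<longlonglongrightarrow> \<eta>"
    using seq_offset_neg[OF lim] .
  have r': "(\<lambda>N. 1 / (real (a (Suc (N - Suc d))) / real (a (N - Suc d)))) \<longlonglongrightarrow> 1 / \<eta>"
    using eta_gt by (intro tendsto_intros r) auto
  have prod: "(\<lambda>N. 1 / (real (a (Suc (N - Suc d))) / real (a (N - Suc d))) * (real (a (N - d)) / real (a N)))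
        \<longlonglongrightarrow> (1 / \<eta>) * (1 / \<eta>) ^ d"
    by (intro tendsto_mult r' Suc.IH)
  have ev: "eventually (\<lambda>N. 1 / (real (a (Suc (N - Suc d))) / real (a (N - Suc d))) * (real (a (N - d)) / real (a N))
      = real (a (N - Suc d)) / real (a N)) sequentially"
    unfolding eventually_sequentially
  proof (intro exI[of _ "Suc (Suc d)"] allI impI)
    fix N assume N: "Suc (Suc d) \<le> N"
    then have e1: "Suc (N - Suc d) = N - d" by simp
    have "real (a (N - d)) > 0" "real (a (N - Suc d)) > 0" using pos N by auto
    then show "1 / (real (a (Suc (N - Suc d))) / real (a (N - Suc d))) * (real (a (N - d)) / real (a N))
      = real (a (N - Suc d)) / real (a N)" unfolding e1 by (simp add: field_simps)
  qed
  show ?case using prod tendsto_cong[OF ev] by simp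
qed

lemma Hs_lim: "(\<lambda>N. Hs a h N / real (a N)) \<longlonglongrightarrow> poly (map_poly real_of_int h) (1 / \<eta>)"
proof -
  have "(\<lambda>N. (\<Sum>d\<le>degree h. real_of_int (coeff h d) * (real (a (N - d)) / real (a N))))
     \<longlonglongrightarrow> (\<Sum>d\<le>degree h. real_of_int (coeff h d) * (1 / \<eta>) ^ d)"
    by (intro tendsto_sum tendsto_mult tendsto_const ratio_lim)
  moreover have "(\<lambda>N. (\<Sum>d\<le>degree h. real_of_int (coeff h d) * (real (a (N - d)) / real (a N)))) = (\<lambda>N. Hs a h N / real (a N))"
    unfolding Hs_def by (simp add: sum_divide_distrib)
  moreover have "poly (map_poly real_of_int h) (1 / \<eta>) = (\<Sum>d\<le>degree h. real_of_int (coeff h d) * (1 / \<eta>) ^ d)"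
    by (simp add: poly_altdef degree_map_poly coeff_map_poly)
  ultimately show ?thesis by simp
qed

lemma poly_nz: "coeff h 0 \<noteq> 0 \<Longrightarrow> poly (map_poly real_of_int h) (1 / \<eta>) \<noteq> 0"
proof
  assume c: "coeff h 0 \<noteq> 0" and p: "poly (map_poly real_of_int h) (1 / \<eta>) = 0"
  have "map_poly real_of_int h \<noteq> 0"
  proof
    assume "map_poly real_of_int h = 0"
    then have "coeff (map_poly real_of_int h) 0 = 0" by simp
    then show False using c by (simp add: coeff_map_poly)
  qed
  moreover have "\<forall>i. coeff (map_poly real_of_int h) i \<in> \<int>" by (simp add: coeff_map_poly)
  ultimately have "algebraic (1 / \<eta>)" using algebraicI p by blast
  then have "algebraic (inverse (1 / \<eta>))" by blast
  then show False using transc by simp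
qed

end

context lacun
begin

lemma dioph_main:
  "\<forall>h. coeff h 0 \<noteq> 0 \<longrightarrow> (\<exists>c>0. eventually (\<lambda>N. \<forall>z\<in>sumset (Aset a (N - 1)) i.
       \<bar>Hs a h N + real_of_int z\<bar> \<ge> c * real (a N)) sequentially)"
proof (induction i)
  case 0
  show ?case
  proof (intro allI impI)
    fix h :: "int poly" assume h: "coeff h 0 \<noteq> 0"
    define L where "L = poly (map_poly real_of_int h) (1 / \<eta>)"
    have L: "L \<noteq> 0" unfolding L_def using poly_nz h by blast
    have "eventually (\<lambda>N. dist (Hs a h N / real (a N)) L < \<bar>L\<bar> / 2) sequentially"
      using Hs_lim[of h] L unfolding L_def by (intro tendstoD) auto
    then have "eventually (\<lambda>N. \<forall>z\<in>sumset (Aset a (N - 1)) 0.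
       \<bar>Hs a h N + real_of_int z\<bar> \<ge> \<bar>L\<bar> / 2 * real (a N)) sequentially"
      using ev_pos[of 0]
    proof eventually_elim
      case (elim N)
      then have aN: "real (a N) > 0" by simp
      have "\<bar>Hs a h N / real (a N)\<bar> \<ge> \<bar>L\<bar> / 2"
        using elim(1) unfolding dist_real_def by linarith
      then have "\<bar>Hs a h N\<bar> / real (a N) \<ge> \<bar>L\<bar> / 2" by simp
      then have "\<bar>Hs a h N\<bar> \<ge> \<bar>L\<bar> / 2 * real (a N)" using aN by (simp add: field_simps)
      then show ?case by simp
    qed
    then show "\<exists>c>0. eventually (\<lambda>N. \<forall>z\<in>sumset (Aset a (N - 1)) 0.
       \<bar>Hs a h N + real_of_int z\<bar> \<ge> c * real (a N)) sequentially"
      using L by (intro exI[of _ "\<bar>L\<bar> / 2"]) auto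
  qed
next
  case (Suc i)
  show ?case
  proof (intro allI impI)
    fix h :: "int poly" assume h: "coeff h 0 \<noteq> 0"
    obtain c0 where c0: "c0 > 0" and E0: "eventually (\<lambda>N. \<forall>z\<in>sumset (Aset a (N - 1)) i.
       \<bar>Hs a h N + real_of_int z\<bar> \<ge> c0 * real (a N)) sequentially"
      using Suc.IH h by blast
    have "eventually (\<lambda>n. (1 / \<eta>) ^ n < c0 / 2) sequentially"
      using eta_gt c0 by (intro order_tendstoD(2)[OF LIMSEQ_power_zero]) auto
    then obtain D where D: "(1 / \<eta>) ^ Suc D < c0 / 2"
      unfolding eventually_sequentially by (metis le_add2 plus_1_eq_Suc)
    have ED: "eventually (\<lambda>N. real (a (N - Suc D)) / real (a N) < c0 / 2) sequentially"
      using ratio_lim[of "Suc D"] D by (intro order_tendstoD(2)) auto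
    define T where "T = {1..D} \<times> {-1, 1::int}"
    have fT: "finite T" unfolding T_def by simp
    have "\<forall>x\<in>T. \<exists>c. c > 0 \<and> eventually (\<lambda>N. \<forall>z\<in>sumset (Aset a (N - 1)) i.
       \<bar>Hs a (h + monom (snd x) (fst x)) N + real_of_int z\<bar> \<ge> c * real (a N)) sequentially"
    proof
      fix x assume "x \<in> T"
      then have "fst x \<ge> 1" unfolding T_def by auto
      then have "coeff (h + monom (snd x) (fst x)) 0 \<noteq> 0" using h by (simp add: coeff_monom)
      then show "\<exists>c. c > 0 \<and> eventually (\<lambda>N. \<forall>z\<in>sumset (Aset a (N - 1)) i.
       \<bar>Hs a (h + monom (snd x) (fst x)) N + real_of_int z\<bar> \<ge> c * real (a N)) sequentially"
        using Suc.IH by blast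
    qed
    from bchoice[OF this] obtain cf where cf: "\<forall>x\<in>T. cf x > 0 \<and> eventually (\<lambda>N. \<forall>z\<in>sumset (Aset a (N - 1)) i.
       \<bar>Hs a (h + monom (snd x) (fst x)) N + real_of_int z\<bar> \<ge> cf x * real (a N)) sequentially"
      by blast
    define c' where "c' = Min (insert (c0 / 2) (cf ` T))"
    have c'pos: "c' > 0" unfolding c'_def using fT cf c0 by (subst Min_gr_iff) auto
    have c'le0: "c' \<le> c0 / 2" unfolding c'_def using fT by (intro Min_le) auto
    have c'le: "x \<in> T \<Longrightarrow> c' \<le> cf x" for x unfolding c'_def using fT by (intro Min_le) auto
    have ET: "eventually (\<lambda>N. \<forall>x\<in>T. \<forall>z\<in>sumset (Aset a (N - 1)) i.
       \<bar>Hs a (h + monom (snd x) (fst x)) N + real_of_int z\<bar> \<ge> cf x * real (a N)) sequentially"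
      by (rule eventually_ball_finite[OF fT]) (use cf in blast)
    have EN: "eventually (\<lambda>N. N > Suc D) sequentially" by (rule eventually_gt_at_top)
    have "eventually (\<lambda>N. \<forall>z\<in>sumset (Aset a (N - 1)) (Suc i).
       \<bar>Hs a h N + real_of_int z\<bar> \<ge> c' * real (a N)) sequentially"
      using E0 ET ED EN ev_pos[of 0]
    proof eventually_elim
      case (elim N)
      have aN: "real (a N) > 0" using elim by simp
      show ?case
      proof
        fix z assume "z \<in> sumset (Aset a (N - 1)) (Suc i)"
        then obtain x y where z: "z = x + y" and x: "x \<in> sumset (Aset a (N - 1)) i"
          and y: "y \<in> Aset a (N - 1)" by auto
        have "\<exists>k e. k \<in> {1..N - 1} \<and> e \<in> {-1, 1::int} \<and> y = e * int (a k)"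
        proof -
          from y obtain k where k: "k \<in> {1..N - 1}" and "y = int (a k) \<or> y = - int (a k)"
            unfolding Aset_def by blast
          then show ?thesis by (metis insertCI mult_1 mult_minus1)
        qed
        then obtain k e where k: "k \<in> {1..N - 1}" and e: "e \<in> {-1, 1::int}" and ye: "y = e * int (a k)"
          by blast
        define d where "d = N - k"
        have d1: "d \<ge> 1" and kd: "k = N - d" using k elim(4) unfolding d_def by auto
        show "\<bar>Hs a h N + real_of_int z\<bar> \<ge> c' * real (a N)"
        proof (cases "d \<le> D")
          case True
          then have dT: "(d, e) \<in> T" unfolding T_def using d1 e by auto
          have "\<bar>Hs a (h + monom e d) N + real_of_int x\<bar> \<ge> cf (d, e) * real (a N)"
            using elim(2)[rule_format, OF dT x] by simp
          moreover have "Hs a (h + monom e d) N + real_of_int x = Hs a h N + real_of_int z"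
            unfolding Hs_shift z ye kd by simp
          moreover have "c' * real (a N) \<le> cf (d, e) * real (a N)"
            using c'le[OF dT] aN by (simp add: mult_right_mono)
          ultimately show ?thesis by linarith
        next
          case False
          then have "k \<le> N - Suc D" using kd elim(4) by linarith
          then have "a k \<le> a (N - Suc D)" using a_mono k by auto
          moreover have "real (a (N - Suc D)) < c0 / 2 * real (a N)"
            using elim(3) aN by (simp add: field_simps)
          ultimately have ysmall: "\<bar>real_of_int y\<bar> \<le> c0 / 2 * real (a N)"
            using e unfolding ye by auto
          have "\<bar>Hs a h N + real_of_int x\<bar> \<ge> c0 * real (a N)" using elim(1) x by blast
          then have "\<bar>Hs a h N + real_of_int z\<bar> \<ge> c0 / 2 * real (a N)"
            using ysmall unfolding z of_int_add by linarith
          moreover have "c' * real (a N) \<le> c0 / 2 * real (a N)"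
            using c'le0 aN by (simp add: mult_right_mono)
          ultimately show ?thesis by linarith
        qed
      qed
    qed
    then show "\<exists>c>0. eventually (\<lambda>N. \<forall>z\<in>sumset (Aset a (N - 1)) (Suc i).
       \<bar>Hs a h N + real_of_int z\<bar> \<ge> c * real (a N)) sequentially"
      using c'pos by blast
  qed
qed

lemma dioph_final:
  "eventually (\<lambda>n. \<forall>i\<le>m. \<forall>q::int. q \<noteq> 0 \<longrightarrow> \<bar>q\<bar> \<le> int m \<longrightarrow> q * int (a (Suc n)) \<notin> sumset (Aset a n) i) sequentially"
proof -
  define P where "P = {..m} \<times> ({- int m..int m} - {0})"
  have fP: "finite P" unfolding P_def by simp
  have "\<forall>p\<in>P. eventually (\<lambda>N. \<forall>z\<in>sumset (Aset a (N - 1)) (fst p). Hs a [:- snd p:] N + real_of_int z \<noteq> 0) sequentially"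
  proof
    fix p assume p: "p \<in> P"
    then have "coeff [:- snd p:] 0 \<noteq> 0" unfolding P_def by auto
    then obtain c where c: "c > 0" and E: "eventually (\<lambda>N. \<forall>z\<in>sumset (Aset a (N - 1)) (fst p).
       \<bar>Hs a [:- snd p:] N + real_of_int z\<bar> \<ge> c * real (a N)) sequentially"
      using dioph_main by blast
    show "eventually (\<lambda>N. \<forall>z\<in>sumset (Aset a (N - 1)) (fst p). Hs a [:- snd p:] N + real_of_int z \<noteq> 0) sequentially"
      using E ev_pos[of 0]
    proof eventually_elim
      case (elim N)
      have "c * real (a N) > 0" using c elim(2) by simp
      then show ?case using elim(1) by force
    qed
  qed
  then have "eventually (\<lambda>N. \<forall>p\<in>P. \<forall>z\<in>sumset (Aset a (N - 1)) (fst p). Hs a [:- snd p:] N + real_of_int z \<noteq> 0) sequentially"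
    by (rule eventually_ball_finite[OF fP])
  then obtain N0 where N0: "\<forall>N\<ge>N0. \<forall>p\<in>P. \<forall>z\<in>sumset (Aset a (N - 1)) (fst p). Hs a [:- snd p:] N + real_of_int z \<noteq> 0"
    unfolding eventually_sequentially by blast
  have "eventually (\<lambda>n. \<forall>p\<in>P. \<forall>z\<in>sumset (Aset a (Suc n - 1)) (fst p). Hs a [:- snd p:] (Suc n) + real_of_int z \<noteq> 0) sequentially"
    unfolding eventually_sequentially
  proof (intro exI[of _ N0] allI impI)
    fix n assume "N0 \<le> n"
    then have "N0 \<le> Suc n" by simp
    then show "\<forall>p\<in>P. \<forall>z\<in>sumset (Aset a (Suc n - 1)) (fst p). Hs a [:- snd p:] (Suc n) + real_of_int z \<noteq> 0"
      using N0 by blast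
  qed
  then show ?thesis
  proof eventually_elim
    case (elim n)
    show ?case
    proof (intro allI impI notI)
      fix i q assume i: "i \<le> m" and q: "q \<noteq> 0" "\<bar>q\<bar> \<le> int m" and mem: "q * int (a (Suc n)) \<in> sumset (Aset a n) i"
      have "(i, q) \<in> P" unfolding P_def using i q by auto
      then have "Hs a [:- q:] (Suc n) + real_of_int (q * int (a (Suc n))) \<noteq> 0"
        using elim[rule_format, of "(i, q)"] mem by (simp del: of_int_mult)
      then show False unfolding Hs_const by simp
    qed
  qed
qed

end

theorem theoremA:
  fixes a :: "nat \<Rightarrow> nat" and \<eta> :: real and m :: nat
  assumes pos: "\<forall>k\<ge>1. 0 < a k"
    and incr: "\<forall>k\<ge>1. a k < a (Suc k)"
    and lim: "(\<lambda>k. real (a (Suc k)) / real (a k)) \<longlonglongrightarrow> \<eta>"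
    and eta_gt: "\<eta> > 1"
    and transc: "\<not> algebraic \<eta>"
    and m: "m \<ge> 1"
  shows "(\<lambda>n. cumulant01 m (S a n) - real n * arcsine_cumulant m) \<in> O(\<lambda>n. 1)
    \<and> (\<lambda>n. cumulant01 m (S a n) / real n) \<longlonglongrightarrow> arcsine_cumulant m"
proof -
  interpret L: lacun a \<eta> using pos incr lim eta_gt transc by unfold_locales
  obtain N0 where N0: "\<And>n. n \<ge> N0 \<Longrightarrow> \<forall>i\<le>m. \<forall>q::int. q \<noteq> 0 \<longrightarrow> \<bar>q\<bar> \<le> int m \<longrightarrow> q * int (a (Suc n)) \<notin> sumset (Aset a n) i"
    using L.dioph_final[of m] unfolding eventually_sequentially by blast
  define K where "K = cumulant01 m (S a N0) - real N0 * arcsine_cumulant m"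
  have key: "cumulant01 m (S a n) - real n * arcsine_cumulant m = K" if n: "n \<ge> N0" for n
    using n
  proof (induction n rule: dec_induct)
    case base then show ?case by (simp add: K_def)
  next
    case (step n)
    have "cumulant01 m (S a (Suc n)) = cumulant01 m (S a n) + arcsine_cumulant m"
      using cumulant_step[of m a n] N0[OF step(1)] arcsine_eq[of m] by simp
    then show ?case using step by (simp add: algebra_simps)
  qed
  have O: "(\<lambda>n. cumulant01 m (S a n) - real n * arcsine_cumulant m) \<in> O(\<lambda>n. 1)"
  proof (rule bigoI[where c = "\<bar>K\<bar>"])
    show "eventually (\<lambda>n. norm (cumulant01 m (S a n) - real n * arcsine_cumulant m) \<le> \<bar>K\<bar> * norm (1::real)) at_top"
      unfolding eventually_at_top_linorder using key by (intro exI[of _ N0]) auto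
  qed
  have ev: "eventually (\<lambda>n. arcsine_cumulant m + K / real n = cumulant01 m (S a n) / real n) sequentially"
    unfolding eventually_sequentially
  proof (intro exI[of _ "max N0 1"] allI impI)
    fix n assume n: "max N0 1 \<le> n"
    then have "real n > 0" by simp
    then show "arcsine_cumulant m + K / real n = cumulant01 m (S a n) / real n"
      using key[of n] n by (simp add: field_simps)
  qed
  have "(\<lambda>n. arcsine_cumulant m + K / real n) \<longlonglongrightarrow> arcsine_cumulant m + 0"
    by (intro tendsto_intros)
  then have "(\<lambda>n. cumulant01 m (S a n) / real n) \<longlonglongrightarrow> arcsine_cumulant m"
    using tendsto_cong[OF ev] by simp
  with O show ?thesis by blast
qed

end
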